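(* $\widetilde{\mathbb{R}}=\mathbb{R}^{\mathrm{alg}}$, i.e. $\widetilde{\mathbb{R}}$ equals the field of real numbers that are algebraic over $\mathbb{Q}$.
   Context: Let $K$ be a field. For $r\in K$, a finite set $A(r)$ with $\{r\}\subseteq A(r)\subseteq K$ is called adequate for $r$ if every mapping $f:A(r)\to K$ satisfying (1) if $1\in A(r)$ then $f(1)=1$; (2) if $a,b\in A(r)$ and $a+b\in A(r)$ then $f(a+b)=f(a)+f(b)$; (3) if $a,b\in A(r)$ and $a\cdot b\in A(r)$ then $f(a\cdot b)=f(a)\cdot f(b)$, also satisfies $f(r)=r$. $\widetilde{K}$ denotes the set of all $r\in K$ for which some finite set adequate for $r$ exists. $\mathbb{R}^{\mathrm{alg}}$ denotes the field of real algebraic numbers. *)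

theory Defs
  imports Complex_Main "HOL-Computational_Algebra.Polynomial"
begin

definition adequate :: "'a::field set \<Rightarrow> 'a \<Rightarrow> bool" where
  "adequate A r \<longleftrightarrow> finite A \<and> r \<in> A \<and>
     (\<forall>f :: 'a \<Rightarrow> 'a.
        ((1 \<in> A \<longrightarrow> f 1 = 1) \<and>
         (\<forall>a\<in>A. \<forall>b\<in>A. a + b \<in> A \<longrightarrow> f (a + b) = f a + f b) \<and>
         (\<forall>a\<in>A. \<forall>b\<in>A. a * b \<in> A \<longrightarrow> f (a * b) = f a * f b))
        \<longrightarrow> f r = r)"

definition tilde :: "'a::field set" where
  "tilde = {r. \<exists>A. adequate A r}"

end

theory Submission
  imports Defs "HOL-Library.Function_Algebras"
begin

type_synonym vec = "nat \<Rightarrow> real"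
type_synonym cf = "vec \<Rightarrow> real"

inductive_set mp :: "nat \<Rightarrow> cf set" for n :: nat where
  mp_const: "(\<lambda>x. of_int c) \<in> mp n"
| mp_var: "i < n \<Longrightarrow> (\<lambda>x. x i) \<in> mp n"
| mp_add: "f \<in> mp n \<Longrightarrow> g \<in> mp n \<Longrightarrow> (\<lambda>x. f x + g x) \<in> mp n"
| mp_mul: "f \<in> mp n \<Longrightarrow> g \<in> mp n \<Longrightarrow> (\<lambda>x. f x * g x) \<in> mp n"

lemma mp_zero [simp]: "(0::cf) \<in> mp n"
  using mp_const[of 0 n] by (simp add: zero_fun_def)

lemma mp_one [simp]: "(1::cf) \<in> mp n"
  using mp_const[of 1 n] by (simp add: one_fun_def)

lemma mp_plus [intro]: "f \<in> mp n \<Longrightarrow> g \<in> mp n \<Longrightarrow> f + g \<in> mp n"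
  using mp_add by (simp add: plus_fun_def)

lemma mp_times [intro]: "f \<in> mp n \<Longrightarrow> g \<in> mp n \<Longrightarrow> f * g \<in> mp n"
  using mp_mul by (simp add: times_fun_def)

lemma mp_uminus [intro]: "f \<in> mp n \<Longrightarrow> - f \<in> mp n"
proof -
  assume "f \<in> mp n"
  then have "(\<lambda>x. (\<lambda>x. of_int (-1)) x * f x) \<in> mp n" by (intro mp_mul mp_const)
  moreover have "- f = (\<lambda>x. (\<lambda>x. of_int (-1)) x * f x)" by (rule ext) simp
  ultimately show ?thesis by simp
qed

lemma mp_minus [intro]: "f \<in> mp n \<Longrightarrow> g \<in> mp n \<Longrightarrow> f - g \<in> mp n"
  using mp_plus[of f n "-g"] mp_uminus[of g n] by simp

lemma mp_sum [intro]: "(\<And>i. i \<in> S \<Longrightarrow> h i \<in> mp n) \<Longrightarrow> sum h S \<in> mp n"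
  by (induction S rule: infinite_finite_induct) auto

lemma mp_of_nat [simp]: "(of_nat k :: cf) \<in> mp n"
  using mp_const[of "int k" n] by (simp add: of_nat_fun)

lemma mp_pow [intro]: "f \<in> mp n \<Longrightarrow> f ^ k \<in> mp n"
  by (induction k) auto

lemma mp_mono: "f \<in> mp n \<Longrightarrow> n \<le> m \<Longrightarrow> f \<in> mp m"
  by (induction rule: mp.induct) (auto intro: mp.intros)

lemma mp_local: "f \<in> mp n \<Longrightarrow> (\<And>i. i < n \<Longrightarrow> x i = y i) \<Longrightarrow> f x = f y"
  by (induction rule: mp.induct) auto

lemma mp_0_const: "f \<in> mp 0 \<Longrightarrow> \<exists>c::int. f = (\<lambda>x. of_int c)"
proof (induction rule: mp.induct)
  case (mp_add f g)
  then obtain c d where "f = (\<lambda>x. of_int c)" "g = (\<lambda>x. of_int d)" by blast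
  then show ?case by (intro exI[of _ "c+d"]) auto
next
  case (mp_mul f g)
  then obtain c d where "f = (\<lambda>x. of_int c)" "g = (\<lambda>x. of_int d)" by blast
  then show ?case by (intro exI[of _ "c*d"]) auto
qed auto

definition PP :: "nat \<Rightarrow> cf poly set" where
  "PP n = {p. \<forall>i. coeff p i \<in> mp n}"

definition ev :: "vec \<Rightarrow> cf poly \<Rightarrow> real poly" where
  "ev x p = map_poly (\<lambda>c. c x) p"

lemma coeff_ev [simp]: "coeff (ev x p) i = coeff p i x"
  by (simp add: ev_def coeff_map_poly)

lemma ev_add [simp]: "ev x (p + q) = ev x p + ev x q"
  by (rule poly_eqI) simp

lemma ev_uminus [simp]: "ev x (- p) = - ev x p"
  by (rule poly_eqI) simp

lemma ev_diff [simp]: "ev x (p - q) = ev x p - ev x q"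
  by (rule poly_eqI) simp

lemma ev_smult [simp]: "ev x (smult c p) = smult (c x) (ev x p)"
  by (rule poly_eqI) simp

lemma ev_0 [simp]: "ev x 0 = 0"
  by (rule poly_eqI) simp

lemma ev_pCons [simp]: "ev x (pCons c p) = pCons (c x) (ev x p)"
  by (rule poly_eqI) (simp add: coeff_pCons split: nat.splits)

lemma ev_mult [simp]: "ev x (p * q) = ev x p * ev x q"
  by (induction p) (simp_all add: algebra_simps)

lemma ev_monom [simp]: "ev x (monom c k) = monom (c x) k"
  by (rule poly_eqI) (simp add: coeff_monom)

lemma ev_1 [simp]: "ev x 1 = 1"
  by (rule poly_eqI) (simp add: coeff_1)

lemma PP_0 [simp]: "0 \<in> PP n" and PP_1 [simp]: "1 \<in> PP n"
  by (auto simp: PP_def coeff_1)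

lemma PP_add [intro]: "p \<in> PP n \<Longrightarrow> q \<in> PP n \<Longrightarrow> p + q \<in> PP n"
  by (auto simp: PP_def)

lemma PP_uminus [intro]: "p \<in> PP n \<Longrightarrow> - p \<in> PP n"
  by (auto simp: PP_def)

lemma PP_diff [intro]: "p \<in> PP n \<Longrightarrow> q \<in> PP n \<Longrightarrow> p - q \<in> PP n"
  by (auto simp: PP_def)

lemma PP_mult [intro]: "p \<in> PP n \<Longrightarrow> q \<in> PP n \<Longrightarrow> p * q \<in> PP n"
  by (auto simp: PP_def coeff_mult)

lemma PP_smult [intro]: "c \<in> mp n \<Longrightarrow> p \<in> PP n \<Longrightarrow> smult c p \<in> PP n"
  by (auto simp: PP_def)

lemma PP_monom [intro]: "c \<in> mp n \<Longrightarrow> monom c k \<in> PP n"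
  by (auto simp: PP_def coeff_monom)

lemma PP_pCons [intro]: "c \<in> mp n \<Longrightarrow> p \<in> PP n \<Longrightarrow> pCons c p \<in> PP n"
  by (auto simp: PP_def coeff_pCons split: nat.splits)

definition pd :: "cf poly \<Rightarrow> cf poly" where
  "pd m = (\<Sum>i<degree m. monom (of_nat (Suc i) * coeff m (Suc i)) i)"

lemma coeff_pd: "coeff (pd m) j = (if j < degree m then of_nat (Suc j) * coeff m (Suc j) else 0)"
  by (simp add: pd_def coeff_sum coeff_monom)

lemma PP_pd [intro]: "p \<in> PP n \<Longrightarrow> pd p \<in> PP n"
  by (auto simp: PP_def coeff_pd simp del: of_nat_Suc intro!: mp_times)

lemma degree_pd: "degree (pd m) < degree m \<or> degree m = 0"
proof (cases "degree m = 0")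
  case False
  have "degree (pd m) \<le> degree m - 1"
    by (rule degree_le) (auto simp: coeff_pd)
  with False show ?thesis by simp
qed simp

lemma ev_pd: "ev x (pd p) = pderiv (ev x p)"
proof (rule poly_eqI)
  fix j
  have "degree (ev x p) \<le> degree p"
    by (rule degree_le) (simp add: coeff_eq_0)
  then show "coeff (ev x (pd p)) j = coeff (pderiv (ev x p)) j"
    by (auto simp: coeff_pd coeff_pderiv of_nat_fun coeff_eq_0)
qed

lemma ev_local: "p \<in> PP n \<Longrightarrow> (\<And>i. i < n \<Longrightarrow> x i = y i) \<Longrightarrow> ev x p = ev y p"
  by (rule poly_eqI) (auto simp: PP_def intro: mp_local)

lemma mp_decomp: "f \<in> mp (Suc n) \<Longrightarrow> \<exists>p\<in>PP n. \<forall>x. f x = poly (ev x p) (x n)"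
proof (induction rule: mp.induct)
  case (mp_const c)
  show ?case by (rule bexI[of _ "[:\<lambda>x. of_int c:]"]) (auto intro: mp.intros)
next
  case (mp_var i)
  show ?case
  proof (cases "i < n")
    case True
    then show ?thesis by (intro bexI[of _ "[:\<lambda>x. x i:]"]) (auto intro: mp.intros)
  next
    case False
    with mp_var have "i = n" by simp
    then show ?thesis by (intro bexI[of _ "[:0, 1:]"]) (auto intro!: PP_pCons)
  qed
next
  case (mp_add f g)
  then obtain p q where "p \<in> PP n" "q \<in> PP n" "\<forall>x. f x = poly (ev x p) (x n)" "\<forall>x. g x = poly (ev x q) (x n)"
    by blast
  then show ?case by (intro bexI[of _ "p + q"]) auto
next
  case (mp_mul f g)
  then obtain p q where "p \<in> PP n" "q \<in> PP n" "\<forall>x. f x = poly (ev x p) (x n)" "\<forall>x. g x = poly (ev x q) (x n)"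
    by blast
  then show ?case by (intro bexI[of _ "p * q"]) auto
qed


lemma pseudo_div:
  assumes m: "m \<in> PP n" "degree m = d" "0 < d"
  shows "e \<in> PP n \<Longrightarrow> \<exists>k q r. q \<in> PP n \<and> r \<in> PP n \<and>
            smult (coeff m d ^ k) e = q * m + r \<and> degree r < d"
proof (induction "degree e" arbitrary: e rule: less_induct)
  case less
  show ?case
  proof (cases "degree e < d")
    case True
    then show ?thesis using less.prems
      by (intro exI[of _ 0] exI[of _ 0] exI[of _ e]) auto
  next
    case False
    define L where "L = coeff m d"
    define c where "c = coeff e (degree e)"
    define s where "s = degree e - d"
    define e' where "e' = smult L e - monom c s * m"
    have Lmp: "L \<in> mp n" using m(1) by (simp add: PP_def L_def)
    have cmp: "c \<in> mp n" using less.prems by (simp add: PP_def c_def)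
    have e'PP: "e' \<in> PP n" unfolding e'_def using less.prems Lmp cmp m(1) by blast
    have "degree e' \<le> degree e - 1"
    proof (rule degree_le, intro allI impI)
      fix j assume j: "degree e - 1 < j"
      show "coeff e' j = 0"
      proof (cases "j = degree e")
        case True
        then have "j - s = d" using False by (simp add: s_def)
        then have "coeff (monom c s * m) j = c * L"
          using True False by (simp add: coeff_monom_mult L_def s_def)
        then show ?thesis using True
          by (simp add: e'_def c_def mult.commute)
      next
        case False2: False
        with j have "j > degree e" by simp
        then have "coeff e j = 0" "coeff m (j - s) = 0"
          using False m(2) by (auto simp: s_def intro!: coeff_eq_0)
        then show ?thesis by (simp add: e'_def coeff_monom_mult)
      qed
    qed
    with False m(3) have "degree e' < degree e" by linarith
    from less.hyps[OF this e'PP] obtain k q r where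
      kqr: "q \<in> PP n" "r \<in> PP n" "smult (L ^ k) e' = q * m + r" "degree r < d"
      unfolding L_def by blast
    have "smult (L ^ Suc k) e = smult (L ^ k) (e' + monom c s * m)"
      by (simp add: e'_def mult.commute)
    also have "\<dots> = (q + smult (L ^ k) (monom c s)) * m + r"
      using kqr(3) by (simp add: smult_add_right algebra_simps)
    finally show ?thesis
      using kqr Lmp cmp unfolding L_def by (intro exI[of _ "Suc k"] exI conjI) (auto intro!: PP_add PP_smult)
  qed
qed

definition G :: "nat \<Rightarrow> vec \<Rightarrow> vec filter" where
  "G n a = (INF \<delta>\<in>{0<..}. principal {b. \<forall>i<n. \<bar>b i - a i\<bar> < \<delta>})"

lemma eventually_G: "eventually P (G n a) \<longleftrightarrow> (\<exists>\<delta>>0. \<forall>b. (\<forall>i<n. \<bar>b i - a i\<bar> < \<delta>) \<longrightarrow> P b)"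
  unfolding G_def
proof (subst eventually_INF_base)
  show "{0::real<..} \<noteq> {}" by auto
next
  fix x y :: real assume "x \<in> {0<..}" "y \<in> {0<..}"
  then show "\<exists>z\<in>{0<..}. principal {b. \<forall>i<n. \<bar>b i - a i\<bar> < z} \<le>
      inf (principal {b. \<forall>i<n. \<bar>b i - a i\<bar> < x}) (principal {b. \<forall>i<n. \<bar>b i - a i\<bar> < y})"
    by (intro bexI[of _ "min x y"]) auto
qed (auto simp: eventually_principal)

lemma mp_tendsto: "f \<in> mp n \<Longrightarrow> (f \<longlongrightarrow> f a) (G n a)"
proof (induction rule: mp.induct)
  case (mp_var i)
  show ?case
  proof (rule tendstoI)
    fix e :: real assume "0 < e"
    then show "eventually (\<lambda>b. dist (b i) (a i) < e) (G n a)"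
      using mp_var by (auto simp: eventually_G dist_real_def intro!: exI[of _ e])
  qed
qed (auto intro: tendsto_intros)

lemma ev_poly_sum: "degree p \<le> N \<Longrightarrow> poly (ev x p) t = (\<Sum>i\<le>N. coeff p i x * t ^ i)"
proof -
  assume "degree p \<le> N"
  moreover have "degree (ev x p) \<le> degree p"
    by (rule degree_le) (simp add: coeff_eq_0)
  ultimately have "degree (ev x p) \<le> N" by simp
  then have eq: "(\<Sum>i\<le>N. monom (coeff (ev x p) i) i) = ev x p"
    by (rule poly_as_sum_of_monoms')
  show ?thesis by (subst eq[symmetric]) (simp add: poly_sum poly_monom del: coeff_ev, simp)
qed

lemma PP_tendsto: "p \<in> PP n \<Longrightarrow> ((\<lambda>b. poly (ev b p) t) \<longlongrightarrow> poly (ev a p) t) (G n a)"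
proof -
  assume p: "p \<in> PP n"
  have "((\<lambda>b. \<Sum>i\<le>degree p. coeff p i b * t ^ i) \<longlongrightarrow> (\<Sum>i\<le>degree p. coeff p i a * t ^ i)) (G n a)"
    using p by (intro tendsto_intros mp_tendsto) (auto simp: PP_def)
  moreover have "\<And>b. poly (ev b p) t = (\<Sum>i\<le>degree p. coeff p i b * t ^ i)"
    by (rule ev_poly_sum) simp
  ultimately show ?thesis by simp
qed


lemma power_fun_apply' [simp]: "((f :: cf) ^ k) x = f x ^ k"
  by (induction k) auto

definition Good :: "nat \<Rightarrow> vec \<Rightarrow> bool" where
  "Good n a \<longleftrightarrow> (\<forall>Z \<epsilon>. finite Z \<longrightarrow> Z \<subseteq> mp n \<longrightarrow> (\<forall>f\<in>Z. f a = 0) \<longrightarrow> 0 < (\<epsilon>::real) \<longrightarrow>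
     (\<exists>b. (\<forall>i<n. \<bar>b i - a i\<bar> < \<epsilon>) \<and> (\<forall>f\<in>Z. f b = 0) \<and> (0 < n \<longrightarrow> b 0 \<noteq> a 0)))"

lemma Good_0: "Good 0 a"
  unfolding Good_def by blast

lemma poly_deg0: "degree (p :: real poly) = 0 \<Longrightarrow> poly p x = coeff p 0"
  by (simp add: poly_altdef)

lemma min_poly:
  assumes p0: "p0 \<in> PP n" "poly (ev a p0) \<alpha> = 0" "ev a p0 \<noteq> 0"
  shows "\<exists>m d. m \<in> PP n \<and> degree m = d \<and> 0 < d \<and> coeff m d a \<noteq> 0 \<and> poly (ev a m) \<alpha> = 0 \<and>
     poly (pderiv (ev a m)) \<alpha> \<noteq> 0 \<and> (\<forall>p\<in>PP n. poly (ev a p) \<alpha> = 0 \<longrightarrow> degree p < d \<longrightarrow> ev a p = 0)"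
proof -
  define Q where "Q k \<longleftrightarrow> (\<exists>p\<in>PP n. ev a p \<noteq> 0 \<and> poly (ev a p) \<alpha> = 0 \<and> degree (ev a p) = k)" for k
  have "Q (degree (ev a p0))" using p0 unfolding Q_def by blast
  define d where "d = (LEAST k. Q k)"
  have "Q d" unfolding d_def by (rule LeastI) fact
  then obtain m0 where m0: "m0 \<in> PP n" "ev a m0 \<noteq> 0" "poly (ev a m0) \<alpha> = 0" "degree (ev a m0) = d"
    unfolding Q_def by blast
  have dgle: "degree (ev a p) \<le> degree p" for p
    by (rule degree_le) (simp add: coeff_eq_0)
  have minimal: "\<forall>p\<in>PP n. poly (ev a p) \<alpha> = 0 \<longrightarrow> degree p < d \<longrightarrow> ev a p = 0"
  proof (intro ballI impI, rule ccontr)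
    fix p assume "p \<in> PP n" "poly (ev a p) \<alpha> = 0" "degree p < d" "ev a p \<noteq> 0"
    then have "Q (degree (ev a p))" unfolding Q_def by blast
    then have "d \<le> degree (ev a p)" unfolding d_def by (rule Least_le)
    with dgle[of p] \<open>degree p < d\<close> show False by simp
  qed
  have d0: "0 < d"
  proof (rule ccontr)
    assume "\<not> 0 < d"
    then have "degree (ev a m0) = 0" using m0 by simp
    then have "poly (ev a m0) \<alpha> = coeff (ev a m0) 0" by (rule poly_deg0)
    moreover have "coeff (ev a m0) 0 \<noteq> 0"
      using m0(2) \<open>degree (ev a m0) = 0\<close> leading_coeff_0_iff by metis
    ultimately show False using m0(3) by simp
  qed
  define m where "m = (\<Sum>i\<le>d. monom (coeff m0 i) i)"
  have cm: "coeff m j = (if j \<le> d then coeff m0 j else 0)" for j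
    by (simp add: m_def coeff_sum coeff_monom)
  have evm: "ev a m = ev a m0"
  proof (rule poly_eqI)
    fix j
    show "coeff (ev a m) j = coeff (ev a m0) j"
    proof (cases "j \<le> d")
      case False
      then have "coeff (ev a m0) j = 0" using m0(4) by (intro coeff_eq_0) simp
      then show ?thesis using False by (simp add: cm)
    qed (simp add: cm)
  qed
  have mPP: "m \<in> PP n" using m0(1) by (auto simp: PP_def cm)
  have lc: "coeff m d a \<noteq> 0"
    using m0(2,4) by (simp add: cm) (metis coeff_ev leading_coeff_0_iff)
  then have "coeff m d \<noteq> 0" by auto
  then have "d \<le> degree m" by (rule le_degree)
  moreover have "degree m \<le> d" by (rule degree_le) (simp add: cm)
  ultimately have dm: "degree m = d" by simp
  have "poly (pderiv (ev a m)) \<alpha> \<noteq> 0"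
  proof
    assume h: "poly (pderiv (ev a m)) \<alpha> = 0"
    have "pd m \<in> PP n" using mPP by blast
    moreover have "degree (pd m) < d" using degree_pd[of m] dm d0 by auto
    ultimately have "ev a (pd m) = 0" using minimal h ev_pd[of a m] by metis
    then have "pderiv (ev a m) = 0" by (simp add: ev_pd)
    then have "degree (ev a m) = 0" by (simp add: pderiv_eq_0_iff)
    with evm m0(4) d0 show False by simp
  qed
  then show ?thesis
    using mPP dm d0 lc evm m0(3) minimal by (intro exI[of _ m] exI[of _ d]) auto
qed

lemma sign_change_pos:
  fixes P :: "real poly"
  assumes "poly P \<alpha> = 0" "0 < poly (pderiv P) \<alpha>" "0 < \<epsilon>"
  shows "\<exists>u v. \<alpha> - \<epsilon> < u \<and> u < \<alpha> \<and> \<alpha> < v \<and> v < \<alpha> + \<epsilon> \<and> poly P u * poly P v < 0"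
proof -
  have D: "DERIV (poly P) \<alpha> :> poly (pderiv P) \<alpha>" by (rule poly_DERIV)
  obtain d1 where d1: "d1 > 0" "\<forall>h>0. h < d1 \<longrightarrow> poly P \<alpha> < poly P (\<alpha> + h)"
    using DERIV_pos_inc_right[OF D assms(2)] by blast
  obtain d2 where d2: "d2 > 0" "\<forall>h>0. h < d2 \<longrightarrow> poly P (\<alpha> - h) < poly P \<alpha>"
    using DERIV_pos_inc_left[OF D assms(2)] by blast
  define h where "h = min (min d1 d2) \<epsilon> / 2"
  have h: "0 < h" "h < d1" "h < d2" "h < \<epsilon>" using d1 d2 assms(3) by (auto simp: h_def)
  have "poly P (\<alpha> - h) < 0" "0 < poly P (\<alpha> + h)" using d1 d2 h assms(1) by auto
  then have "poly P (\<alpha> - h) * poly P (\<alpha> + h) < 0" by (simp add: mult_neg_pos)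
  then show ?thesis using h by (intro exI[of _ "\<alpha> - h"] exI[of _ "\<alpha> + h"]) auto
qed

lemma sign_change:
  fixes P :: "real poly"
  assumes "poly P \<alpha> = 0" "poly (pderiv P) \<alpha> \<noteq> 0" "0 < \<epsilon>"
  shows "\<exists>u v. \<alpha> - \<epsilon> < u \<and> u < \<alpha> \<and> \<alpha> < v \<and> v < \<alpha> + \<epsilon> \<and> poly P u * poly P v < 0"
proof (cases "0 < poly (pderiv P) \<alpha>")
  case True
  then show ?thesis using sign_change_pos assms by blast
next
  case False
  with assms have "0 < poly (pderiv (-P)) \<alpha>" by (simp add: pderiv_minus)
  from sign_change_pos[OF _ this assms(3)] assms(1) show ?thesis by auto
qed


lemma decomp_choice:
  assumes "Z \<subseteq> mp (Suc n)"
  obtains P where "\<And>f. f \<in> Z \<Longrightarrow> P f \<in> PP n" "\<And>f x. f \<in> Z \<Longrightarrow> f x = poly (ev x (P f)) (x n)"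
proof -
  have "\<forall>f\<in>Z. \<exists>p. p \<in> PP n \<and> (\<forall>x. f x = poly (ev x p) (x n))"
    using mp_decomp assms by blast
  then obtain P where "\<forall>f\<in>Z. P f \<in> PP n \<and> (\<forall>x. f x = poly (ev x (P f)) (x n))"
    by metis
  then show ?thesis using that by blast
qed

lemma ev_zero_from_coeffs:
  assumes "\<And>i. i \<le> degree p \<Longrightarrow> coeff p i x = 0"
  shows "ev x p = 0"
proof (rule poly_eqI)
  fix i show "coeff (ev x p) i = coeff 0 i"
    using assms[of i] by (cases "i \<le> degree p") (auto simp: coeff_eq_0)
qed

lemma coeff_sets_finite:
  assumes "finite Z"
  shows "finite (\<Union>f\<in>Z. (\<lambda>i. coeff (R f) i) ` {..degree (R f)})"
  using assms by auto

lemma trans_step: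
  assumes G: "Good n a" and T: "\<forall>p\<in>PP n. poly (ev a p) (a n) = 0 \<longrightarrow> ev a p = 0"
  shows "Good (Suc n) a"
  unfolding Good_def
proof (intro allI impI)
  fix Z and \<epsilon> :: real
  assume Z: "finite Z" "Z \<subseteq> mp (Suc n)" "\<forall>f\<in>Z. f a = 0" and \<epsilon>: "0 < \<epsilon>"
  obtain P where P: "\<And>f. f \<in> Z \<Longrightarrow> P f \<in> PP n" "\<And>f x. f \<in> Z \<Longrightarrow> f x = poly (ev x (P f)) (x n)"
    using decomp_choice[OF Z(2)] by blast
  have evP: "ev a (P f) = 0" if "f \<in> Z" for f
    using T P[OF that] Z(3) that by metis
  define Z' where "Z' = (\<Union>f\<in>Z. (\<lambda>i. coeff (P f) i) ` {..degree (P f)})"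
  have "finite Z'" unfolding Z'_def using Z(1) by auto
  moreover have "Z' \<subseteq> mp n" unfolding Z'_def using P(1) by (auto simp: PP_def)
  moreover have "\<forall>g\<in>Z'. g a = 0" unfolding Z'_def using evP
    by auto (metis coeff_0 coeff_ev)
  ultimately obtain b where b: "\<forall>i<n. \<bar>b i - a i\<bar> < \<epsilon>" "\<forall>g\<in>Z'. g b = 0" "0 < n \<longrightarrow> b 0 \<noteq> a 0"
    using G \<epsilon> unfolding Good_def by blast
  define \<beta> where "\<beta> = (if n = 0 then a n + \<epsilon> / 2 else a n)"
  define b' where "b' = b(n := \<beta>)"
  show "\<exists>b. (\<forall>i<Suc n. \<bar>b i - a i\<bar> < \<epsilon>) \<and> (\<forall>f\<in>Z. f b = 0) \<and> (0 < Suc n \<longrightarrow> b 0 \<noteq> a 0)"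
  proof (intro exI[of _ b'] conjI allI impI ballI)
    fix i assume "i < Suc n"
    then show "\<bar>b' i - a i\<bar> < \<epsilon>" using b(1) \<epsilon> by (cases "i = n") (auto simp: b'_def \<beta>_def)
  next
    fix f assume f: "f \<in> Z"
    have "ev b' (P f) = ev b (P f)" by (rule ev_local[OF P(1)[OF f]]) (simp add: b'_def)
    also have "\<dots> = 0"
      by (rule ev_zero_from_coeffs) (use b(2) f in \<open>auto simp: Z'_def\<close>)
    finally show "f b' = 0" using P(2)[OF f, of b'] by simp
  next
    show "b' 0 \<noteq> a 0" using b(3) \<epsilon> by (cases "n = 0") (auto simp: b'_def \<beta>_def)
  qed
qed

lemma alg_step:
  assumes G: "Good n a" and n: "0 < n" and p0: "p0 \<in> PP n" "poly (ev a p0) (a n) = 0" "ev a p0 \<noteq> 0"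
  shows "Good (Suc n) a"
  unfolding Good_def
proof (intro allI impI)
  fix Z and \<epsilon> :: real
  assume Z: "finite Z" "Z \<subseteq> mp (Suc n)" "\<forall>f\<in>Z. f a = 0" and \<epsilon>: "0 < \<epsilon>"
  define \<alpha> where "\<alpha> = a n"
  obtain m d where m: "m \<in> PP n" "degree m = d" "0 < d" "coeff m d a \<noteq> 0" "poly (ev a m) \<alpha> = 0"
     "poly (pderiv (ev a m)) \<alpha> \<noteq> 0" "\<forall>p\<in>PP n. poly (ev a p) \<alpha> = 0 \<longrightarrow> degree p < d \<longrightarrow> ev a p = 0"
    using min_poly[OF p0(1) p0(2)[folded \<alpha>_def] p0(3)] by blast
  define L where "L = coeff m d"
  have Lmp: "L \<in> mp n" using m(1) by (simp add: PP_def L_def)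
  obtain P where P: "\<And>f. f \<in> Z \<Longrightarrow> P f \<in> PP n" "\<And>f x. f \<in> Z \<Longrightarrow> f x = poly (ev x (P f)) (x n)"
    using decomp_choice[OF Z(2)] by blast
  have "\<forall>f\<in>Z. \<exists>k q r. q \<in> PP n \<and> r \<in> PP n \<and> smult (L ^ k) (P f) = q * m + r \<and> degree r < d"
    using pseudo_div[OF m(1-3)] P(1) unfolding L_def by blast
  then obtain K Q R where KQR: "\<forall>f\<in>Z. Q f \<in> PP n \<and> R f \<in> PP n \<and>
      smult (L ^ K f) (P f) = Q f * m + R f \<and> degree (R f) < d"
    by metis
  have Rzero: "ev a (R f) = 0" if f: "f \<in> Z" for f
  proof -
    have "ev a (smult (L ^ K f) (P f)) = ev a (Q f * m + R f)" using KQR f by simp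
    then have "smult (L a ^ K f) (ev a (P f)) = ev a (Q f) * ev a m + ev a (R f)" by simp
    then have "L a ^ K f * poly (ev a (P f)) \<alpha> = poly (ev a (Q f)) \<alpha> * poly (ev a m) \<alpha> + poly (ev a (R f)) \<alpha>"
      by (metis poly_add poly_mult poly_smult)
    moreover have "poly (ev a (P f)) \<alpha> = 0" using P(2)[OF f, of a] Z(3) f by (simp add: \<alpha>_def) metis
    ultimately have "poly (ev a (R f)) \<alpha> = 0" using m(5) by simp
    then show ?thesis using m(7) KQR f by blast
  qed
  define Z' where "Z' = (\<Union>f\<in>Z. (\<lambda>i. coeff (R f) i) ` {..degree (R f)})"
  have "finite Z'" unfolding Z'_def using Z(1) by auto
  moreover have "Z' \<subseteq> mp n" unfolding Z'_def using KQR by (auto simp: PP_def)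
  moreover have Z'a: "\<forall>g\<in>Z'. g a = 0" unfolding Z'_def using Rzero
    by auto (metis coeff_0 coeff_ev)
  ultimately have GZ': "\<And>\<delta>. 0 < \<delta> \<Longrightarrow> \<exists>b. (\<forall>i<n. \<bar>b i - a i\<bar> < \<delta>) \<and> (\<forall>g\<in>Z'. g b = 0) \<and> b 0 \<noteq> a 0"
    using G n unfolding Good_def by blast
  obtain u v where uv: "\<alpha> - \<epsilon> < u" "u < \<alpha>" "\<alpha> < v" "v < \<alpha> + \<epsilon>" "poly (ev a m) u * poly (ev a m) v < 0"
    using sign_change[OF m(5) m(6) \<epsilon>] by blast
  have e1: "eventually (\<lambda>b. \<forall>i<n. \<bar>b i - a i\<bar> < \<epsilon>) (G n a)"
    using \<epsilon> by (auto simp: eventually_G)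
  have "((\<lambda>b. \<bar>L b\<bar>) \<longlongrightarrow> \<bar>L a\<bar>) (G n a)" using mp_tendsto[OF Lmp] by (rule tendsto_rabs)
  moreover have "0 < \<bar>L a\<bar>" using m(4) by (simp add: L_def)
  ultimately have e2: "eventually (\<lambda>b. 0 < \<bar>L b\<bar>) (G n a)" by (rule order_tendstoD(1))
  have "((\<lambda>b. poly (ev b m) u * poly (ev b m) v) \<longlongrightarrow> poly (ev a m) u * poly (ev a m) v) (G n a)"
    by (intro tendsto_mult PP_tendsto m(1))
  then have e3: "eventually (\<lambda>b. poly (ev b m) u * poly (ev b m) v < 0) (G n a)"
    using uv(5) by (rule order_tendstoD(2))
  have "eventually (\<lambda>b. (\<forall>i<n. \<bar>b i - a i\<bar> < \<epsilon>) \<and> 0 < \<bar>L b\<bar> \<and> poly (ev b m) u * poly (ev b m) v < 0) (G n a)"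
    using e1 e2 e3 by eventually_elim auto
  then obtain \<delta> where \<delta>: "0 < \<delta>" "\<forall>b. (\<forall>i<n. \<bar>b i - a i\<bar> < \<delta>) \<longrightarrow>
      (\<forall>i<n. \<bar>b i - a i\<bar> < \<epsilon>) \<and> 0 < \<bar>L b\<bar> \<and> poly (ev b m) u * poly (ev b m) v < 0"
    unfolding eventually_G by blast
  obtain b where b: "\<forall>i<n. \<bar>b i - a i\<bar> < \<delta>" "\<forall>g\<in>Z'. g b = 0" "b 0 \<noteq> a 0"
    using GZ'[OF \<delta>(1)] by blast
  have bb: "\<forall>i<n. \<bar>b i - a i\<bar> < \<epsilon>" "L b \<noteq> 0" "poly (ev b m) u * poly (ev b m) v < 0"
    using \<delta>(2) b(1) by auto
  obtain \<beta> where \<beta>: "u < \<beta>" "\<beta> < v" "poly (ev b m) \<beta> = 0"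
    using poly_IVT[OF _ bb(3)] uv by auto
  define b' where "b' = b(n := \<beta>)"
  show "\<exists>b. (\<forall>i<Suc n. \<bar>b i - a i\<bar> < \<epsilon>) \<and> (\<forall>f\<in>Z. f b = 0) \<and> (0 < Suc n \<longrightarrow> b 0 \<noteq> a 0)"
  proof (intro exI[of _ b'] conjI allI impI ballI)
    fix i assume "i < Suc n"
    then show "\<bar>b' i - a i\<bar> < \<epsilon>" using bb(1) uv \<beta> by (cases "i = n") (auto simp: b'_def \<alpha>_def)
  next
    fix f assume f: "f \<in> Z"
    have "ev b' (P f) = ev b (P f)" by (rule ev_local[OF P(1)[OF f]]) (simp add: b'_def)
    have R0: "ev b (R f) = 0"
      by (rule ev_zero_from_coeffs) (use b(2) f in \<open>auto simp: Z'_def\<close>)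
    have "ev b (smult (L ^ K f) (P f)) = ev b (Q f * m + R f)" using KQR f by simp
    then have "smult (L b ^ K f) (ev b (P f)) = ev b (Q f) * ev b m + ev b (R f)" by simp
    then have "L b ^ K f * poly (ev b (P f)) \<beta> = poly (ev b (Q f)) \<beta> * poly (ev b m) \<beta> + poly (ev b (R f)) \<beta>"
      by (metis poly_add poly_mult poly_smult)
    then have "L b ^ K f * poly (ev b (P f)) \<beta> = 0" using R0 \<beta>(3) by simp
    then have "poly (ev b (P f)) \<beta> = 0" using bb(2) by simp
    then show "f b' = 0" using P(2)[OF f, of b'] \<open>ev b' (P f) = ev b (P f)\<close> by (simp add: b'_def)
  next
    show "b' 0 \<noteq> a 0" using b(3) n by (simp add: b'_def)
  qed
qed

lemma Good_all:
  assumes "\<not> algebraic (a 0)"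
  shows "Good n a"
proof (induction n)
  case 0 then show ?case by (rule Good_0)
next
  case (Suc n)
  show ?case
  proof (cases "\<forall>p\<in>PP n. poly (ev a p) (a n) = 0 \<longrightarrow> ev a p = 0")
    case True
    then show ?thesis using trans_step Suc by blast
  next
    case False
    then obtain p0 where p0: "p0 \<in> PP n" "poly (ev a p0) (a n) = 0" "ev a p0 \<noteq> 0" by blast
    show ?thesis
    proof (cases "n = 0")
      case True
      have "coeff (ev a p0) i \<in> \<int>" for i
      proof -
        have "coeff p0 i \<in> mp 0" using p0(1) True by (simp add: PP_def)
        then obtain c where "coeff p0 i = (\<lambda>x. of_int c)" using mp_0_const by blast
        then show ?thesis by simp
      qed
      then have "algebraic (a 0)" using p0 True by (intro algebraicI) auto
      with assms show ?thesis by blast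
    next
      case False
      then show ?thesis using alg_step[OF Suc] p0 by blast
    qed
  qed
qed


lemma mp_rel_add: "i < n \<Longrightarrow> j < n \<Longrightarrow> k < n \<Longrightarrow> (\<lambda>x. x i + x j - x k) \<in> mp n"
proof -
  assume h: "i < n" "j < n" "k < n"
  have eq: "(\<lambda>x. x i + x j - x k) = (\<lambda>x. x i) + (\<lambda>x. x j) - (\<lambda>x. x k)" by (simp add: fun_eq_iff)
  show ?thesis unfolding eq using h by (intro mp_minus mp_plus mp_times mp_var mp_one)
qed

lemma mp_rel_mul: "i < n \<Longrightarrow> j < n \<Longrightarrow> k < n \<Longrightarrow> (\<lambda>x. x i * x j - x k) \<in> mp n"
proof -
  assume h: "i < n" "j < n" "k < n"
  have eq: "(\<lambda>x. x i * x j - x k) = (\<lambda>x. x i) * (\<lambda>x. x j) - (\<lambda>x. x k)" by (simp add: fun_eq_iff)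
  show ?thesis unfolding eq using h by (intro mp_minus mp_plus mp_times mp_var mp_one)
qed

lemma mp_rel_one: "i < n \<Longrightarrow> (\<lambda>x. x i - 1) \<in> mp n"
proof -
  assume h: "i < n"
  have eq: "(\<lambda>x. x i - 1) = (\<lambda>x. x i) - 1" by (simp add: fun_eq_iff)
  show ?thesis unfolding eq using h by (intro mp_minus mp_plus mp_times mp_var mp_one)
qed

lemma transcendental_not_adequate:
  fixes r :: real
  assumes tr: "\<not> algebraic r"
  shows "\<not> adequate A r"
proof
  assume ad: "adequate A r"
  then have fin: "finite A" and rA: "r \<in> A" by (auto simp: adequate_def)
  define xs where "xs = r # sorted_list_of_set (A - {r})"
  define N where "N = length xs"
  define a where "a i = (if i < N then xs ! i else 0)" for i
  have dist: "distinct xs" using fin by (simp add: xs_def)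
  have setxs: "set xs = A" using fin rA by (auto simp: xs_def)
  have N0: "0 < N" by (simp add: N_def xs_def)
  have a0: "a 0 = r" using N0 by (simp add: a_def xs_def)
  have inj: "inj_on a {..<N}"
  proof -
    have "inj_on (nth xs) {..<N}" using dist by (simp add: N_def inj_on_nth)
    then show ?thesis by (rule inj_on_cong[THEN iffD1, rotated]) (simp add: a_def)
  qed
  have Aimg: "A = a ` {..<N}"
    using setxs by (auto simp: a_def N_def in_set_conv_nth image_iff)
  have G: "Good N a" using tr a0 by (intro Good_all) simp
  define Z1 where "Z1 = (\<lambda>(i,j,k). (\<lambda>x::vec. x i + x j - x k)) `
      {(i,j,k). i < N \<and> j < N \<and> k < N \<and> a i + a j = a k}"
  define Z2 where "Z2 = (\<lambda>(i,j,k). (\<lambda>x::vec. x i * x j - x k)) `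
      {(i,j,k). i < N \<and> j < N \<and> k < N \<and> a i * a j = a k}"
  define Z3 where "Z3 = (\<lambda>i. (\<lambda>x::vec. x i - 1)) ` {i. i < N \<and> a i = 1}"
  have finT: "finite {(i,j,k). i < N \<and> j < N \<and> k < N \<and> P i j k}" for P :: "nat \<Rightarrow> nat \<Rightarrow> nat \<Rightarrow> bool"
    by (rule finite_subset[of _ "{..<N} \<times> {..<N} \<times> {..<N}"]) auto
  have "finite (Z1 \<union> Z2 \<union> Z3)" unfolding Z1_def Z2_def Z3_def by (intro finite_UnI finite_imageI finT) (rule finite_subset[of _ "{..<N}"], auto)
  moreover have "Z1 \<union> Z2 \<union> Z3 \<subseteq> mp N"
    unfolding Z1_def Z2_def Z3_def by (auto intro: mp_rel_add mp_rel_mul mp_rel_one)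
  moreover have "\<forall>g\<in>Z1 \<union> Z2 \<union> Z3. g a = 0"
    unfolding Z1_def Z2_def Z3_def by auto
  ultimately obtain b where b: "\<forall>g\<in>Z1 \<union> Z2 \<union> Z3. g b = 0" "b 0 \<noteq> a 0"
    using G N0 unfolding Good_def by (metis zero_less_one)
  define f where "f y = b (the_inv_into {..<N} a y)" for y
  have fa: "f (a i) = b i" if "i < N" for i
    using that inj by (simp add: f_def the_inv_into_f_f)
  have "f r = r"
  proof (rule ad[unfolded adequate_def, THEN conjunct2, THEN conjunct2, rule_format], intro conjI impI ballI)
    assume "1 \<in> A"
    then obtain i where i: "i < N" "a i = 1" using Aimg by auto
    then have "(\<lambda>x::vec. x i - 1) \<in> Z3" by (auto simp: Z3_def)
    then have "b i = 1" using bspec[OF b(1), of "\<lambda>x::vec. x i - 1"] by simp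
    then show "f 1 = 1" using fa i by metis
  next
    fix u v assume uv: "u \<in> A" "v \<in> A" "u + v \<in> A"
    then obtain i j k where ijk: "i < N" "j < N" "k < N" "u = a i" "v = a j" "u + v = a k"
      using Aimg by (smt (verit) imageE lessThan_iff)
    then have "(\<lambda>x::vec. x i + x j - x k) \<in> Z1" by (auto simp: Z1_def image_iff)
    then have "b i + b j - b k = 0" using bspec[OF b(1), of "\<lambda>x::vec. x i + x j - x k"] by simp
    then show "f (u + v) = f u + f v" using fa ijk by simp
  next
    fix u v assume uv: "u \<in> A" "v \<in> A" "u * v \<in> A"
    then obtain i j k where ijk: "i < N" "j < N" "k < N" "u = a i" "v = a j" "u * v = a k"
      using Aimg by (smt (verit) imageE lessThan_iff)
    then have "(\<lambda>x::vec. x i * x j - x k) \<in> Z2" by (auto simp: Z2_def image_iff)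
    then have "b i * b j - b k = 0" using bspec[OF b(1), of "\<lambda>x::vec. x i * x j - x k"] by simp
    then show "f (u * v) = f u * f v" using fa ijk by simp
  qed
  moreover have "f r = b 0" using fa[OF N0] a0 by simp
  ultimately show False using b(2) a0 by simp
qed


lemma isolate_root:
  fixes p :: "real poly" and r :: real
  assumes "p \<noteq> 0"
  shows "\<exists>q1\<in>\<rat>. \<exists>q2\<in>\<rat>. q1 < r \<and> r < q2 \<and> (\<forall>x. poly p x = 0 \<longrightarrow> q1 \<le> x \<longrightarrow> x \<le> q2 \<longrightarrow> x = r)"
proof -
  define R where "R = {x. poly p x = 0} - {r}"
  have finR: "finite R" using poly_roots_finite[OF assms] by (simp add: R_def)
  define \<delta> where "\<delta> = (if R = {} then 1 else Min ((\<lambda>x. \<bar>x - r\<bar>) ` R))"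
  have \<delta>0: "0 < \<delta>" using finR by (auto simp: \<delta>_def R_def)
  have \<delta>le: "\<delta> \<le> \<bar>x - r\<bar>" if "x \<in> R" for x
    using that finR by (auto simp: \<delta>_def)
  obtain q1 where q1: "q1 \<in> \<rat>" "r - \<delta> < q1" "q1 < r" using Rats_dense_in_real[of "r - \<delta>" r] \<delta>0 by auto
  obtain q2 where q2: "q2 \<in> \<rat>" "r < q2" "q2 < r + \<delta>" using Rats_dense_in_real[of r "r + \<delta>"] \<delta>0 by auto
  have "x = r" if "poly p x = 0" "q1 \<le> x" "x \<le> q2" for x
  proof (rule ccontr)
    assume "x \<noteq> r"
    then have "x \<in> R" using that by (simp add: R_def)
    then have "\<delta> \<le> \<bar>x - r\<bar>" by (rule \<delta>le)
    with that q1 q2 show False by auto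
  qed
  then show ?thesis using q1 q2 by blast
qed

lemma algebraic_adequate:
  fixes r :: real
  assumes "algebraic r"
  shows "\<exists>A. adequate A r"
proof -
  obtain p where pZ: "\<And>i. coeff p i \<in> \<int>" and p0: "p \<noteq> 0" and pr: "poly p r = 0"
    using algebraicE[OF assms] by metis
  obtain q1 q2 where q: "q1 \<in> \<rat>" "q2 \<in> \<rat>" "q1 < r" "r < q2"
    and iso: "\<forall>x. poly p x = 0 \<longrightarrow> q1 \<le> x \<longrightarrow> x \<le> q2 \<longrightarrow> x = r"
    using isolate_root[OF p0, of r] by blast
  obtain n1 d1 where nd1: "d1 > 0" "q1 = of_int n1 / of_int d1" using q(1) by (rule Rats_cases') blast
  obtain n2 d2 where nd2: "d2 > 0" "q2 = of_int n2 / of_int d2" using q(2) by (rule Rats_cases') blast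
  define D where "D = degree p"
  define ic where "ic i = \<lfloor>coeff p i\<rfloor>" for i
  have ic: "coeff p i = of_int (ic i)" for i using pZ[of i] by (simp add: ic_def)
  define K where "K = 1 + \<bar>n1\<bar> + \<bar>n2\<bar> + d1 + d2 + (\<Sum>i\<le>D. \<bar>ic i\<bar>)"
  have icK: "\<bar>ic i\<bar> \<le> K" if "i \<le> D" for i
  proof -
    have "\<bar>ic i\<bar> \<le> (\<Sum>i\<le>D. \<bar>ic i\<bar>)"
      using that by (intro member_le_sum) auto
    then show ?thesis using nd1 nd2 by (simp add: K_def)
  qed
  have K: "1 \<le> K" "\<bar>n1\<bar> \<le> K" "\<bar>n2\<bar> \<le> K" "d1 \<le> K" "d2 \<le> K"
    using nd1 nd2 by (auto simp: K_def intro!: sum_nonneg)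
  define s1 where "s1 = of_int d1 * r - of_int n1"
  define s2 where "s2 = of_int n2 - of_int d2 * r"
  have s1: "0 < s1" using q(3) nd1 by (simp add: s1_def field_simps)
  have s2: "0 < s2" using q(4) nd2 by (simp add: s2_def field_simps)
  define I where "I = (of_int :: int \<Rightarrow> real) ` {-K..K}"
  define Pw where "Pw = (\<lambda>i. r ^ i) ` {..D}"
  define Tm where "Tm = (\<lambda>i. coeff p i * r ^ i) ` {..D}"
  define Ps where "Ps = (\<lambda>j. \<Sum>i<j. coeff p i * r ^ i) ` {..Suc D}"
  define Od where "Od = {r, of_int d1 * r, s1, sqrt s1, of_int d2 * r, s2, sqrt s2}"
  define A where "A = I \<union> Pw \<union> Tm \<union> Ps \<union> Od"
  have finA: "finite A" by (simp add: A_def I_def Pw_def Tm_def Ps_def Od_def)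
  have IA: "of_int k \<in> A" if "\<bar>k\<bar> \<le> K" for k
  proof -
    have "k \<in> {-K..K}" using that by auto
    then show ?thesis by (simp add: A_def I_def)
  qed
  have PwA: "r ^ i \<in> A" if "i \<le> D" for i using that by (auto simp: A_def Pw_def)
  have TmA: "coeff p i * r ^ i \<in> A" if "i \<le> D" for i using that by (auto simp: A_def Tm_def)
  have PsA: "(\<Sum>i<j. coeff p i * r ^ i) \<in> A" if "j \<le> Suc D" for j using that by (auto simp: A_def Ps_def)
  have OdA: "r \<in> A" "of_int d1 * r \<in> A" "s1 \<in> A" "sqrt s1 \<in> A" "of_int d2 * r \<in> A" "s2 \<in> A" "sqrt s2 \<in> A"
    by (auto simp: A_def Od_def)
  have "adequate A r"
    unfolding adequate_def
  proof (intro conjI allI impI finA OdA(1))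
    fix f :: "real \<Rightarrow> real"
    assume H: "(1 \<in> A \<longrightarrow> f 1 = 1) \<and>
         (\<forall>a\<in>A. \<forall>b\<in>A. a + b \<in> A \<longrightarrow> f (a + b) = f a + f b) \<and>
         (\<forall>a\<in>A. \<forall>b\<in>A. a * b \<in> A \<longrightarrow> f (a * b) = f a * f b)"
    have Hadd: "f (a + b) = f a + f b" if "a \<in> A" "b \<in> A" "a + b \<in> A" for a b
      using H that by blast
    have Hmul: "f (a * b) = f a * f b" if "a \<in> A" "b \<in> A" "a * b \<in> A" for a b
      using H that by blast
    have one: "1 \<in> A" using IA[of 1] K by simp
    then have f1: "f 1 = 1" using H by blast
    have zero: "0 \<in> A" using IA[of 0] K by simp
    have "f (0 + 0) = f 0 + f 0" by (rule Hadd) (use zero in auto)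
    then have f0: "f 0 = 0" by simp
    have fnat: "f (of_nat k) = of_nat k" if "int k \<le> K" for k
      using that
    proof (induction k)
      case 0 then show ?case using f0 by simp
    next
      case (Suc k)
      have a: "of_nat k \<in> A" using IA[of "int k"] Suc.prems by simp
      have b: "of_nat (Suc k) \<in> A" using IA[of "int (Suc k)"] Suc.prems by simp
      have "f (of_nat (Suc k)) = f (of_nat k + 1)" by (simp add: add.commute)
      also have "\<dots> = f (of_nat k) + f 1" using Hadd[OF a one] b by (simp add: add.commute)
      finally show ?case using Suc f1 by simp
    qed
    have fint: "f (of_int k) = of_int k" if "\<bar>k\<bar> \<le> K" for k
    proof (cases "0 \<le> k")
      case True
      then show ?thesis using fnat[of "nat k"] that by simp
    next
      case False
      have a: "of_int k \<in> A" using IA that by blast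
      have b: "of_int (-k) \<in> A" using IA[of "-k"] that by simp
      have "f (of_int k + of_int (-k)) = f (of_int k) + f (of_int (-k))"
        using Hadd[OF a b] zero by simp
      moreover have "f (of_int (-k)) = of_int (-k)" using fnat[of "nat (-k)"] that False by simp
      ultimately show ?thesis using f0 by simp
    qed
    have fpow: "f (r ^ i) = f r ^ i" if "i \<le> D" for i
      using that
    proof (induction i)
      case 0 then show ?case using f1 by simp
    next
      case (Suc i)
      have "f (r ^ Suc i) = f (r ^ i * r)" by (simp add: mult.commute)
      also have "\<dots> = f (r ^ i) * f r"
        using Hmul[OF PwA[of i] OdA(1)] PwA[of "Suc i"] Suc.prems by (simp add: mult.commute)
      finally show ?case using Suc by simp
    qed
    have fterm: "f (coeff p i * r ^ i) = coeff p i * f r ^ i" if "i \<le> D" for i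
    proof -
      have c: "coeff p i \<in> A" "f (coeff p i) = coeff p i"
        using IA[of "ic i"] fint[of "ic i"] icK[OF that] by (simp_all add: ic)
      show ?thesis using Hmul[OF c(1) PwA[OF that] TmA[OF that]] c(2) fpow[OF that] by simp
    qed
    have fsum: "f (\<Sum>i<j. coeff p i * r ^ i) = (\<Sum>i<j. coeff p i * f r ^ i)" if "j \<le> Suc D" for j
      using that
    proof (induction j)
      case 0 then show ?case using f0 by simp
    next
      case (Suc j)
      have "f (\<Sum>i<Suc j. coeff p i * r ^ i) = f ((\<Sum>i<j. coeff p i * r ^ i) + coeff p j * r ^ j)"
        by simp
      also have "\<dots> = f (\<Sum>i<j. coeff p i * r ^ i) + f (coeff p j * r ^ j)"
        using Hadd[OF PsA[of j] TmA[of j]] PsA[of "Suc j"] Suc.prems by simp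
      finally show ?case using Suc fterm[of j] by simp
    qed
    have polysum: "poly p x = (\<Sum>i<Suc D. coeff p i * x ^ i)" for x
      by (simp add: poly_altdef D_def lessThan_Suc_atMost)
    have "poly p (f r) = f (poly p r)"
      using fsum[of "Suc D"] by (simp add: polysum)
    then have root: "poly p (f r) = 0" using pr f0 by simp
    have dr1: "f (of_int d1 * r) = of_int d1 * f r"
      using Hmul[OF IA[of d1] OdA(1) OdA(2)] fint[of d1] K nd1 by simp
    have dr2: "f (of_int d2 * r) = of_int d2 * f r"
      using Hmul[OF IA[of d2] OdA(1) OdA(5)] fint[of d2] K nd2 by simp
    have fs1: "f s1 \<ge> 0"
    proof -
      have "sqrt s1 * sqrt s1 = s1" using s1 by simp
      then have "f s1 = f (sqrt s1) * f (sqrt s1)" using Hmul[OF OdA(4) OdA(4)] OdA(3) by simp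
      then show ?thesis by simp
    qed
    have fs2: "f s2 \<ge> 0"
    proof -
      have "sqrt s2 * sqrt s2 = s2" using s2 by simp
      then have "f s2 = f (sqrt s2) * f (sqrt s2)" using Hmul[OF OdA(7) OdA(7)] OdA(6) by simp
      then show ?thesis by simp
    qed
    have "s1 + of_int n1 = of_int d1 * r" by (simp add: s1_def)
    then have "f s1 + of_int n1 = of_int d1 * f r"
      using Hadd[OF OdA(3) IA[of n1]] OdA(2) dr1 fint[of n1] K by simp
    with fs1 have "of_int n1 \<le> of_int d1 * f r" by simp
    moreover have "of_int n1 = of_int d1 * q1" using nd1 by simp
    ultimately have "of_int d1 * q1 \<le> of_int d1 * f r" by simp
    then have lo: "q1 \<le> f r" using nd1(1) by (simp add: mult_le_cancel_left_pos)
    have "s2 + of_int d2 * r = of_int n2" by (simp add: s2_def)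
    then have "f s2 + of_int d2 * f r = of_int n2"
      using Hadd[OF OdA(6) OdA(5)] IA[of n2] dr2 fint[of n2] K by simp
    with fs2 have "of_int d2 * f r \<le> of_int n2" by simp
    moreover have "of_int n2 = of_int d2 * q2" using nd2 by simp
    ultimately have "of_int d2 * f r \<le> of_int d2 * q2" by simp
    then have hi: "f r \<le> q2" using nd2(1) by (simp add: mult_le_cancel_left_pos)
    show "f r = r" using iso root lo hi by blast
  qed
  then show ?thesis by blast
qed

theorem theorem6:
  shows "(tilde :: real set) = {x :: real. algebraic x}"
proof (rule set_eqI)
  fix x :: real
  show "x \<in> tilde \<longleftrightarrow> x \<in> {x. algebraic x}"
    using transcendental_not_adequate algebraic_adequate by (auto simp: tilde_def)
qed

end
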